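(* Let $n$ be a positive integer, $\mathbf 1=(1,\dots,1)\in\mathbb N^n$ and $\mathbf b=(0,1,\dots,1)\in\mathbb N^n$. Then $$\sum_{m\ge0}v^{(n,m)}(\mathbf 1,\mathbf b)x^m=\frac{\sum_{k=1}^nA(n,k)x^{k-1}}{(1-x)^{n+1}}.$$
   Context: For $m\ge1$, $v^{(n,m)}(\mathbf a,\mathbf b)$ is the number of vertices of the flow polytope $\mathcal F_{G(n,m)}(\mathbf a,\mathbf b)$, where $G(n,m)$ has vertex set $\{(i,j):1\le i\le n,0\le j\le m\}\cup\{s\}$ and edges $((i,j),(i,j+1))$ ($1\le i\le n$, $0\le j\le m-1$), $((i,j),(i+1,j))$ ($1\le i\le n-1$, $0\le j\le m$), $((n,j),s)$ ($0\le j\le m$), and the polytope consists of nonnegative real edge weightings with outflow minus inflow $a_i$ at $(i,0)$, $-b_i$ at $(i,m)$, $-\sum a_i+\sum b_i$ at $s$, $0$ elsewhere; the $m=0$ coefficient is taken to be $1$. $A(n,k)$ is the Eulerian number: the number of permutations of $\{1,\dots,n\}$ with exactly $k-1$ descents (positions $i$ with $w_i>w_{i+1}$). *)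

theory Defs
  imports "HOL-Analysis.Analysis" "HOL-Analysis.Finite_Function_Topology" "HOL-Computational_Algebra.Formal_Power_Series"
    "HOL-Combinatorics.Permutations"
begin

datatype gvert = Grid nat nat | Sink

definition G_edges :: "nat \<Rightarrow> nat \<Rightarrow> (gvert \<times> gvert) set" where
  "G_edges n m =
     {(Grid i j, Grid i (j+1)) | i j. 1 \<le> i \<and> i \<le> n \<and> j < m}
   \<union> {(Grid i j, Grid (i+1) j) | i j. 1 \<le> i \<and> i \<le> n - 1 \<and> j \<le> m}
   \<union> {(Grid n j, Sink) | j. j \<le> m}"

definition G_verts :: "nat \<Rightarrow> nat \<Rightarrow> gvert set" where
  "G_verts n m = {Grid i j | i j. 1 \<le> i \<and> i \<le> n \<and> j \<le> m} \<union> {Sink}"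

definition netflow_req :: "nat \<Rightarrow> nat \<Rightarrow> (nat \<Rightarrow> real) \<Rightarrow> (nat \<Rightarrow> real) \<Rightarrow> gvert \<Rightarrow> real" where
  "netflow_req n m a b v =
     (case v of
        Sink \<Rightarrow> - (\<Sum>i=1..n. a i) + (\<Sum>i=1..n. b i)
      | Grid i j \<Rightarrow> (if j = 0 then a i else if j = m then - b i else 0))"

definition flow_polytope :: "nat \<Rightarrow> nat \<Rightarrow> (nat \<Rightarrow> real) \<Rightarrow> (nat \<Rightarrow> real)
    \<Rightarrow> ((gvert \<times> gvert, real) poly_mapping) set" where
  "flow_polytope n m a b =
     {f. (\<forall>e. e \<notin> G_edges n m \<longrightarrow> Poly_Mapping.lookup f e = 0)
       \<and> (\<forall>e\<in>G_edges n m. 0 \<le> Poly_Mapping.lookup f e)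
       \<and> (\<forall>v\<in>G_verts n m.
            (\<Sum>e\<in>{e\<in>G_edges n m. fst e = v}. Poly_Mapping.lookup f e)
          - (\<Sum>e\<in>{e\<in>G_edges n m. snd e = v}. Poly_Mapping.lookup f e) = netflow_req n m a b v)}"

text \<open>Number of vertices v^(n,m)(a,b); the m = 0 coefficient is 1 by convention.\<close>
definition num_vertices :: "nat \<Rightarrow> nat \<Rightarrow> (nat \<Rightarrow> real) \<Rightarrow> (nat \<Rightarrow> real) \<Rightarrow> nat" where
  "num_vertices n m a b =
     (if m = 0 then 1 else card {f. f extreme_point_of flow_polytope n m a b})"

definition eulerian :: "nat \<Rightarrow> nat \<Rightarrow> nat" where
  "eulerian n k = card {w. w permutes {1..n} \<and>
      card {i. 1 \<le> i \<and> i < n \<and> w i > w (i+1)} = k - 1}"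

end

theory Submission
  imports Defs
begin

definition ins :: "nat \<Rightarrow> 'a \<Rightarrow> 'a list \<Rightarrow> 'a list" where
  "ins p x ys = take p ys @ x # drop p ys"

fun desc :: "nat list \<Rightarrow> nat" where
  "desc (a#b#xs) = (if b < a then 1 else 0) + desc (b#xs)"
| "desc _ = 0"

definition dset :: "nat list \<Rightarrow> nat set" where
  "dset xs = {i. Suc i < length xs \<and> xs!Suc i < xs!i}"

lemma dset_Cons2: "dset (a#b#xs) = (if b < a then {0} else {}) \<union> Suc ` dset (b#xs)"
proof (rule set_eqI)
  fix i show "i \<in> dset (a#b#xs) \<longleftrightarrow> i \<in> (if b < a then {0} else {}) \<union> Suc ` dset (b#xs)"
    by (cases i) (auto simp: dset_def)
qed

lemma finite_dset[simp]: "finite (dset xs)"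
  by (rule finite_subset[of _ "{..<length xs}"]) (auto simp: dset_def)

lemma desc_card: "desc xs = card (dset xs)"
proof (induction xs rule: desc.induct)
  case (1 a b xs)
  have "0 \<notin> Suc ` dset (b#xs)" by auto
  then show ?case using 1 by (simp add: dset_Cons2 card_image card_insert_if)
next
  case ("2_1") then show ?case by (simp add: dset_def)
next
  case ("2_2" v) then show ?case by (simp add: dset_def)
qed

lemma desc_le: "desc xs \<le> length xs - 1"
  by (induction xs rule: desc.induct) auto

lemma desc_ins:
  assumes "\<forall>y\<in>set ys. y < M" "p \<le> length ys"
  shows "desc (ins p M ys) = desc ys +
     (if p = length ys \<or> (0 < p \<and> ys!p < ys!(p-1)) then 0 else 1)"
  using assms
proof (induction ys arbitrary: p)
  case Nil
  then show ?case by (simp add: ins_def)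
next
  case (Cons a ys')
  show ?case
  proof (cases p)
    case 0
    then show ?thesis using Cons.prems by (simp add: ins_def)
  next
    case (Suc q)
    have q: "q \<le> length ys'" using Cons.prems Suc by simp
    have IH: "desc (ins q M ys') = desc ys' +
     (if q = length ys' \<or> (0 < q \<and> ys'!q < ys'!(q-1)) then 0 else 1)"
      using Cons q by simp
    have e: "ins p M (a#ys') = a # ins q M ys'" using Suc by (simp add: ins_def)
    have aM: "a < M" using Cons.prems by simp
    show ?thesis
    proof (cases q)
      case 0
      show ?thesis
      proof (cases ys')
        case Nil
        then show ?thesis using e aM \<open>q = 0\<close> \<open>p = Suc q\<close> by (simp add: ins_def)
      next
        case (Cons c zs)
        have "ins q M ys' = M # c # zs" using \<open>q = 0\<close> Cons by (simp add: ins_def)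
        then show ?thesis using e aM IH \<open>q = 0\<close> \<open>p = Suc q\<close> Cons by simp
      qed
    next
      case (Suc r)
      then obtain c zs where ys': "ys' = c # zs" using q by (cases ys') auto
      have "ins q M ys' = c # ins r M zs" using Suc ys' by (simp add: ins_def)
      then show ?thesis using e IH ys' Suc \<open>p = Suc q\<close> by simp
    qed
  qed
qed

lemma keep_set: "{p. p \<le> length ys \<and> (p = length ys \<or> (0 < p \<and> ys!p < ys!(p-1)))}
   = insert (length ys) (Suc ` dset ys)"
proof (rule set_eqI)
  fix p show "p \<in> {p. p \<le> length ys \<and> (p = length ys \<or> (0 < p \<and> ys!p < ys!(p-1)))}
   \<longleftrightarrow> p \<in> insert (length ys) (Suc ` dset ys)"
    by (cases p) (auto simp: dset_def)
qed

lemma keep_card: "card {p. p \<le> length ys \<and> (p = length ys \<or> (0 < p \<and> ys!p < ys!(p-1)))}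
   = desc ys + 1"
proof -
  have "length ys \<notin> Suc ` dset ys" by (auto simp: dset_def)
  then show ?thesis unfolding keep_set by (simp add: card_image desc_card)
qed

lemma pos_count:
  assumes "\<forall>y\<in>set ys. y < M"
  shows "card {p. p \<le> length ys \<and> desc (ins p M ys) = e} =
    (if e = desc ys then desc ys + 1 else 0) + (if e = desc ys + 1 then length ys - desc ys else 0)"
proof -
  define K where "K = {p. p \<le> length ys \<and> (p = length ys \<or> (0 < p \<and> ys!p < ys!(p-1)))}"
  have KA: "K \<subseteq> {..length ys}" by (auto simp: K_def)
  have cK: "card K = desc ys + 1" using keep_card K_def by simp
  have d: "\<And>p. p \<le> length ys \<Longrightarrow> desc (ins p M ys) = desc ys + (if p \<in> K then 0 else 1)"
    using desc_ins[OF assms] by (simp add: K_def)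
  show ?thesis
  proof (cases "e = desc ys")
    case True
    have "{p. p \<le> length ys \<and> desc (ins p M ys) = e} = K"
    proof (rule set_eqI)
      fix p show "p \<in> {p. p \<le> length ys \<and> desc (ins p M ys) = e} \<longleftrightarrow> p \<in> K"
      proof (cases "p \<le> length ys")
        case True
        then show ?thesis using d[OF True] \<open>e = desc ys\<close> by (cases "p \<in> K") simp_all
      next
        case False
        then show ?thesis using KA by auto
      qed
    qed
    then show ?thesis using cK True by simp
  next
    case False
    show ?thesis
    proof (cases "e = desc ys + 1")
      case True
      have "{p. p \<le> length ys \<and> desc (ins p M ys) = e} = {..length ys} - K"
      proof (rule set_eqI)
        fix p show "p \<in> {p. p \<le> length ys \<and> desc (ins p M ys) = e} \<longleftrightarrow> p \<in> {..length ys} - K"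
        proof (cases "p \<le> length ys")
          case T: True
          then show ?thesis using d[OF T] \<open>e = desc ys + 1\<close> by (cases "p \<in> K") simp_all
        next
          case False
          then show ?thesis using KA by auto
        qed
      qed
      moreover have "finite K" using finite_subset[OF KA] by simp
      ultimately show ?thesis using cK True KA by (simp add: card_Diff_subset)
    next
      case F2: False
      have "{p. p \<le> length ys \<and> desc (ins p M ys) = e} = {}"
      proof (rule equals0I)
        fix p assume "p \<in> {p. p \<le> length ys \<and> desc (ins p M ys) = e}"
        then have "p \<le> length ys" "desc (ins p M ys) = e" by simp_all
        then show False using d[of p] False F2 by (cases "p \<in> K") simp_all
      qed
      then show ?thesis using False F2 by simp
    qed
  qed
qed

definition Pm :: "nat \<Rightarrow> nat list set" where
  "Pm n = {xs. distinct xs \<and> set xs = {1..n}}"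

lemma Pm_length: "xs \<in> Pm n \<Longrightarrow> length xs = n"
proof -
  assume "xs \<in> Pm n"
  then have d: "distinct xs" "set xs = {1..n}" by (simp_all add: Pm_def)
  have "length xs = card (set xs)" using distinct_card[OF d(1)] by simp
  also have "\<dots> = n" using d(2) by simp
  finally show ?thesis .
qed

lemma finite_Pm: "finite (Pm n)"
proof (rule finite_subset)
  show "Pm n \<subseteq> {xs. set xs \<subseteq> {1..n} \<and> length xs = n}" using Pm_length by (auto simp: Pm_def)
  show "finite {xs. set xs \<subseteq> {1..n} \<and> length xs = n}" by (rule finite_lists_length_eq) simp
qed

lemma set_ins: "set (ins p x ys) = insert x (set ys)"
proof -
  have "set ys = set (take p ys @ drop p ys)" by simp
  then show ?thesis unfolding ins_def by (simp only: set_append) auto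
qed

lemma distinct_ins: "distinct ys \<Longrightarrow> x \<notin> set ys \<Longrightarrow> distinct (ins p x ys)"
proof -
  assume a: "distinct ys" "x \<notin> set ys"
  have d: "distinct (take p ys)" "distinct (drop p ys)" "set (take p ys) \<inter> set (drop p ys) = {}"
    using a(1) by (simp, simp, rule set_take_disj_set_drop_if_distinct, simp_all)
  have "x \<notin> set (take p ys)" using a(2) in_set_takeD by metis
  have "x \<notin> set (drop p ys)" using a(2) in_set_dropD by metis
  then show ?thesis using d \<open>x \<notin> set (take p ys)\<close> unfolding ins_def by auto
qed

lemma ins_nth: "p \<le> length ys \<Longrightarrow> ins p x ys ! p = x"
  by (simp add: ins_def nth_append)

lemma ins_lt:
  assumes "p < q" "x \<notin> set zs" "q \<le> length zs" "p \<le> length ys" "ins p x ys = ins q x zs"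
  shows False
proof -
  have "ins q x zs ! p = zs ! p" using assms(1,3) by (simp add: ins_def nth_append)
  moreover have m: "zs ! p \<in> set zs" using assms(1,3) by simp
  moreover have "ins p x ys ! p = x" using assms(4) by (rule ins_nth)
  ultimately have "x \<in> set zs" using assms(5) by simp
  then show False using assms(2) by simp
qed

lemma ins_inj:
  assumes "x \<notin> set ys" "x \<notin> set ys'" "p \<le> length ys" "q \<le> length ys'"
    and eq: "ins p x ys = ins q x ys'"
  shows "p = q \<and> ys = ys'"
proof -
  have pq: "p = q"
  proof (rule linorder_cases[of p q])
    assume "p < q" then show ?thesis using ins_lt[OF _ assms(2) assms(4) assms(3) eq] by blast
  next
    assume "q < p" then show ?thesis using ins_lt[OF _ assms(1) assms(3) assms(4) eq[symmetric]] by blast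
  qed
  have l: "length (take p ys) = length (take p ys')" using assms pq by simp
  have "ins p x ys = ins p x ys'" using eq pq by (simp only:)
  then have "take p ys @ x # drop p ys = take p ys' @ x # drop p ys'" unfolding ins_def .
  then have "take p ys = take p ys' \<and> x # drop p ys = x # drop p ys'"
    by (rule iffD1[OF append_eq_append_conv[OF disjI1[OF l]]])
  then have "take p ys = take p ys'" "drop p ys = drop p ys'" by simp_all
  then have "ys = ys'" by (metis append_take_drop_id)
  then show ?thesis using pq by simp
qed

lemma Pm_Suc_decomp:
  "{xs\<in>Pm (Suc n). desc xs = e} =
     (\<lambda>(ys,p). ins p (Suc n) ys) ` (SIGMA ys:Pm n. {p. p \<le> n \<and> desc (ins p (Suc n) ys) = e})"
proof (rule set_eqI, rule iffI)
  fix xs assume "xs \<in> {xs\<in>Pm (Suc n). desc xs = e}"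
  then have xs: "distinct xs" "set xs = {1..Suc n}" "desc xs = e" by (auto simp: Pm_def)
  then have "Suc n \<in> set xs" by simp
  then obtain us vs where uv: "xs = us @ Suc n # vs" by (meson split_list)
  define ys where "ys = us @ vs"
  have ins: "ins (length us) (Suc n) ys = xs" by (simp add: ins_def ys_def uv)
  have "distinct ys" using xs uv by (simp add: ys_def)
  moreover have "set ys = {1..n}"
  proof -
    have nin: "Suc n \<notin> set ys" using xs uv by (auto simp: ys_def)
    have i: "insert (Suc n) (set ys) = {1..Suc n}" using xs uv by (auto simp: ys_def)
    have "set ys = insert (Suc n) (set ys) - {Suc n}" using nin by auto
    also have "\<dots> = {1..Suc n} - {Suc n}" by (simp only: i)
    also have "\<dots> = {1..n}" by auto
    finally show ?thesis .
  qed
  ultimately have yP: "ys \<in> Pm n" by (simp add: Pm_def)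
  have "length us \<le> n" using Pm_length[OF yP] by (simp add: ys_def)
  then show "xs \<in> (\<lambda>(ys,p). ins p (Suc n) ys) ` (SIGMA ys:Pm n. {p. p \<le> n \<and> desc (ins p (Suc n) ys) = e})"
    using yP ins xs by (auto intro!: image_eqI[where x="(ys, length us)"])
next
  fix xs assume "xs \<in> (\<lambda>(ys,p). ins p (Suc n) ys) ` (SIGMA ys:Pm n. {p. p \<le> n \<and> desc (ins p (Suc n) ys) = e})"
  then obtain ys p where yp: "ys \<in> Pm n" "p \<le> n" "desc (ins p (Suc n) ys) = e" "xs = ins p (Suc n) ys"
    by auto
  have "distinct xs" using yp distinct_ins[of ys "Suc n" p] by (auto simp: Pm_def)
  moreover have "set xs = {1..Suc n}" using yp by (auto simp: Pm_def set_ins)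
  ultimately show "xs \<in> {xs\<in>Pm (Suc n). desc xs = e}" using yp by (simp add: Pm_def)
qed

definition cnt :: "nat \<Rightarrow> nat \<Rightarrow> nat" where
  "cnt n e = card {xs\<in>Pm n. desc xs = e}"

lemma cnt_Suc_nat:
  "cnt (Suc n) e = (\<Sum>ys\<in>Pm n. card {p. p \<le> n \<and> desc (ins p (Suc n) ys) = e})"
proof -
  have inj: "inj_on (\<lambda>(ys,p). ins p (Suc n) ys) (SIGMA ys:Pm n. {p. p \<le> n \<and> desc (ins p (Suc n) ys) = e})"
  proof (rule inj_onI)
    fix u v
    assume u: "u \<in> (SIGMA ys:Pm n. {p. p \<le> n \<and> desc (ins p (Suc n) ys) = e})"
      and v: "v \<in> (SIGMA ys:Pm n. {p. p \<le> n \<and> desc (ins p (Suc n) ys) = e})"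
      and eq: "(\<lambda>(ys,p). ins p (Suc n) ys) u = (\<lambda>(ys,p). ins p (Suc n) ys) v"
    obtain ys p where u': "u = (ys,p)" by (cases u)
    obtain ys' p' where v': "v = (ys',p')" by (cases v)
    have y: "ys \<in> Pm n" "p \<le> n" using u u' by auto
    have y': "ys' \<in> Pm n" "p' \<le> n" using v v' by auto
    have n1: "Suc n \<notin> set ys" using y(1) by (simp add: Pm_def)
    have n2: "Suc n \<notin> set ys'" using y'(1) by (simp add: Pm_def)
    have l1: "p \<le> length ys" using y Pm_length by simp
    have l2: "p' \<le> length ys'" using y' Pm_length by simp
    have "ins p (Suc n) ys = ins p' (Suc n) ys'" using eq u' v' by simp
    then have "p = p' \<and> ys = ys'" by (rule ins_inj[OF n1 n2 l1 l2])
    then show "u = v" using u' v' by simp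
  qed
  show ?thesis unfolding cnt_def Pm_Suc_decomp
    by (simp add: card_image[OF inj] finite_Pm)
qed

lemma sum_if_const: "finite A \<Longrightarrow> (\<Sum>x\<in>A. if P x then (c::real) else 0) = real (card {x\<in>A. P x}) * c"
proof -
  assume "finite A"
  then have "(\<Sum>x\<in>{x\<in>A. P x}. c) = (\<Sum>x\<in>A. if P x then c else 0)"
    by (rule sum.inter_filter)
  then show ?thesis by (simp add: mult.commute)
qed

lemma cnt_Suc:
  "real (cnt (Suc n) e) = real (e+1) * real (cnt n e)
     + (if e \<ge> 1 then (real n - real (e-1)) * real (cnt n (e-1)) else 0)"
proof -
  have pc: "real (card {p. p \<le> n \<and> desc (ins p (Suc n) ys) = e}) =
     (if desc ys = e then real (e+1) else 0) + (if desc ys = e - 1 \<and> e \<ge> 1 then real n - real (e-1) else 0)"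
    if "ys \<in> Pm n" for ys
  proof -
    have l: "length ys = n" using Pm_length that .
    have "\<forall>y\<in>set ys. y < Suc n" using that by (auto simp: Pm_def)
    from pos_count[OF this, of e] l have
      "card {p. p \<le> n \<and> desc (ins p (Suc n) ys) = e} = (if e = desc ys then desc ys + 1 else 0) + (if e = desc ys + 1 then n - desc ys else 0)"
      by simp
    moreover have dn: "desc ys \<le> n" using desc_le[of ys] l by simp
    ultimately show ?thesis
    proof -
      assume c: "card {p. p \<le> n \<and> desc (ins p (Suc n) ys) = e} = (if e = desc ys then desc ys + 1 else 0) + (if e = desc ys + 1 then n - desc ys else 0)"
      show ?thesis
      proof (cases "desc ys = e")
        case True
        then have "\<not> (desc ys = e - 1 \<and> e \<ge> 1)" by auto
        then show ?thesis using c True by auto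
      next
        case False
        show ?thesis
        proof (cases "e = desc ys + 1")
          case True
          then have "real (n - desc ys) = real n - real (e - 1)" using dn by (simp add: of_nat_diff)
          then show ?thesis using c True False by simp
        next
          case F2: False
          then have "\<not> (desc ys = e - 1 \<and> e \<ge> 1)" by auto
          then show ?thesis using c F2 False by auto
        qed
      qed
    qed
  qed
  have "real (cnt (Suc n) e) = (\<Sum>ys\<in>Pm n. (if desc ys = e then real (e+1) else 0) + (if desc ys = e - 1 \<and> e \<ge> 1 then real n - real (e-1) else 0))"
    unfolding cnt_Suc_nat of_nat_sum by (rule sum.cong[OF refl pc])
  also have "\<dots> = (\<Sum>ys\<in>Pm n. (if desc ys = e then real (e+1) else 0)) + (\<Sum>ys\<in>Pm n. (if desc ys = e - 1 \<and> e \<ge> 1 then real n - real (e-1) else 0))"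
    by (rule sum.distrib)
  also have "\<dots> = real (card {ys\<in>Pm n. desc ys = e}) * real (e+1) + real (card {ys\<in>Pm n. desc ys = e - 1 \<and> e \<ge> 1}) * (real n - real (e-1))"
    by (simp only: sum_if_const[OF finite_Pm])
  also have "\<dots> = real (e+1) * real (cnt n e)
     + (if e \<ge> 1 then (real n - real (e-1)) * real (cnt n (e-1)) else 0)"
    by (cases "e \<ge> 1") (simp_all add: cnt_def)
  finally show ?thesis .
qed

definition Ef :: "nat \<Rightarrow> real fps" where "Ef n = Abs_fps (\<lambda>d. real (cnt n d))"
definition Sf :: "nat \<Rightarrow> real fps" where "Sf n = Abs_fps (\<lambda>m. real (Suc m) ^ n)"

lemma Pm0: "Pm 0 = {[]}"
  by (auto simp: Pm_def)

lemma cnt0: "cnt 0 e = (if e = 0 then 1 else 0)"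
proof -
  have "{xs \<in> Pm 0. desc xs = e} = (if e = 0 then {[]} else {})" by (auto simp: Pm0)
  then show ?thesis by (simp add: cnt_def)
qed

lemma Ef_Suc: "Ef (Suc n) = fps_deriv (fps_X * Ef n) + fps_X * (fps_const (real n) * Ef n - fps_X * fps_deriv (Ef n))"
proof (rule fps_ext)
  fix m
  show "fps_nth (Ef (Suc n)) m = fps_nth (fps_deriv (fps_X * Ef n) + fps_X * (fps_const (real n) * Ef n - fps_X * fps_deriv (Ef n))) m"
  proof (cases m)
    case 0
    then show ?thesis by (simp add: Ef_def cnt_Suc)
  next
    case (Suc k)
    then show ?thesis
      by (cases k) (simp_all add: Ef_def cnt_Suc algebra_simps)
  qed
qed

lemma Sf_Suc: "Sf (Suc n) = fps_deriv (fps_X * Sf n)"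
  by (rule fps_ext) (simp add: Sf_def distrib_right)

lemma main_fps: "Sf n * (1 - fps_X) ^ (n+1) = Ef n"
proof (induction n)
  case 0
  have "Sf 0 * (1 - fps_X) ^ (0+1) = Sf 0 - Sf 0 * fps_X" by (simp add: algebra_simps)
  also have "\<dots> = Ef 0"
    by (rule fps_ext) (simp add: Sf_def Ef_def cnt0)
  finally show ?case .
next
  case (Suc n)
  define D :: "real fps" where "D = 1 - fps_X"
  define U where "U = D ^ n"
  define S where "S = Sf n"
  define C where "C = fps_const (real n)"
  have E: "Ef n = S * (D * U)" using Suc.IH by (simp add: S_def D_def U_def)
  have dD: "fps_deriv D = -1" by (simp add: D_def)
  have "fps_deriv (Ef n) = fps_deriv (S * (D * U))" using E by simp
  also have "\<dots> = fps_deriv S * (D * U) + S * (fps_deriv D * U + D * fps_deriv U)"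
    by (simp add: algebra_simps)
  finally have E1: "fps_deriv (Ef n) = fps_deriv S * (D * U) + S * (fps_deriv D * U + D * fps_deriv U)" .
  have DU: "D * fps_deriv U = - C * U"
  proof (cases n)
    case 0 then show ?thesis by (simp add: U_def C_def)
  next
    case (Suc k)
    have f: "fps_deriv U = fps_const (real n) * fps_deriv D * D ^ k"
      unfolding U_def fps_deriv_power using Suc by (simp only: diff_Suc_1)
    have U2: "U = D * D ^ k" by (simp add: U_def Suc)
    show ?thesis unfolding f unfolding U2 dD C_def by (simp add: algebra_simps)
  qed
  have E': "fps_deriv (Ef n) = fps_deriv S * (D * U) - S * U - C * S * U"
    using E1 DU dD by (simp add: algebra_simps)
  have X: "fps_X = 1 - D" by (simp add: D_def)
  have "Sf (Suc n) * (1 - fps_X) ^ (Suc n + 1) = (S + fps_X * fps_deriv S) * (D * (D * U))"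
    by (simp add: Sf_Suc S_def D_def U_def algebra_simps)
  also have "\<dots> = fps_deriv (fps_X * Ef n) + fps_X * (C * Ef n - fps_X * fps_deriv (Ef n))"
    unfolding fps_deriv_mult fps_deriv_fps_X E' unfolding E X by algebra
  also have "\<dots> = Ef (Suc n)" by (simp add: Ef_Suc C_def)
  finally show ?case .
qed

lemma phi_Pm:
  assumes perm: "w permutes {1..n}"
  shows "map w [1..<Suc n] \<in> Pm n"
proof -
  have s: "set [1..<Suc n] = {1..n}" by auto
  have "distinct (map w [1..<Suc n])"
    using permutes_inj_on[OF perm] by (simp add: distinct_map)
  moreover have "set (map w [1..<Suc n]) = {1..n}"
    using permutes_image[OF perm] s by simp
  ultimately show ?thesis by (simp add: Pm_def)
qed

lemma phi_inj: "inj_on (\<lambda>w. map w [1..<Suc n]) {w. w permutes {1..n}}"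
proof (rule inj_onI)
  fix w w' assume w: "w \<in> {w. w permutes {1..n}}" and w': "w' \<in> {w. w permutes {1..n}}"
    and eq: "map w [1..<Suc n] = map w' [1..<Suc n]"
  have a: "\<forall>i\<in>set [1..<Suc n]. w i = w' i" using eq by (simp only: map_eq_conv)
  show "w = w'"
  proof (rule ext)
    fix x show "w x = w' x"
    proof (cases "x \<in> {1..n}")
      case True then show ?thesis using a by auto
    next
      case False
      then show ?thesis using permutes_not_in[of w "{1..n}"] permutes_not_in[of w' "{1..n}"] w w' by simp
    qed
  qed
qed

lemma phi_surj:
  assumes xs: "xs \<in> Pm n"
  shows "\<exists>w. w permutes {1..n} \<and> map w [1..<Suc n] = xs"
proof -
  have d: "distinct xs" and sx: "set xs = {1..n}" using xs by (simp_all add: Pm_def)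
  have l: "length xs = n" using Pm_length[OF xs] .
  define w where "w = (\<lambda>i. if i \<in> {1..n} then xs!(i-1) else i)"
  have m: "map w [1..<Suc n] = xs"
    by (rule nth_equalityI) (simp_all add: l w_def del: upt_Suc)
  have inj: "inj_on w {1..n}"
  proof (rule inj_onI)
    fix i j assume i: "i \<in> {1..n}" and j: "j \<in> {1..n}" and e: "w i = w j"
    then have "xs!(i-1) = xs!(j-1)" by (simp add: w_def)
    moreover have "i - 1 < length xs" "j - 1 < length xs" using i j l by auto
    ultimately have "i - 1 = j - 1" using nth_eq_iff_index_eq[OF d] by simp
    then show "i = j" using i j by auto
  qed
  have sub: "w ` {1..n} \<subseteq> {1..n}"
  proof
    fix y assume "y \<in> w ` {1..n}"
    then obtain i where i: "i \<in> {1..n}" and y: "y = w i" by blast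
    have "i - 1 < length xs" using i l by auto
    then have "xs!(i-1) \<in> set xs" by (rule nth_mem)
    then show "y \<in> {1..n}" using y i sx by (simp add: w_def)
  qed
  have "w ` {1..n} = {1..n}" using endo_inj_surj[OF _ sub inj] by simp
  then have "bij_betw w {1..n} {1..n}" using inj by (simp add: bij_betw_def)
  moreover have "\<And>x. x \<notin> {1..n} \<Longrightarrow> w x = x" unfolding w_def by presburger
  ultimately have "w permutes {1..n}" by (rule bij_imp_permutes)
  then show ?thesis using m by blast
qed

lemma phi_desc:
  "card {i. 1 \<le> i \<and> i < n \<and> w i > w (i+1)} = desc (map w [1..<Suc n])"
proof -
  have ds: "dset (map w [1..<Suc n]) = {i. Suc i < n \<and> w (Suc (Suc i)) < w (Suc i)}"
  proof (rule set_eqI)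
    fix i show "i \<in> dset (map w [1..<Suc n]) \<longleftrightarrow> i \<in> {i. Suc i < n \<and> w (Suc (Suc i)) < w (Suc i)}"
      by (cases "Suc i < n") (simp_all add: dset_def del: upt_Suc)
  qed
  have "{i. 1 \<le> i \<and> i < n \<and> w i > w (i+1)} = Suc ` {i. Suc i < n \<and> w (Suc (Suc i)) < w (Suc i)}"
  proof (rule set_eqI)
    fix i show "i \<in> {i. 1 \<le> i \<and> i < n \<and> w i > w (i+1)} \<longleftrightarrow> i \<in> Suc ` {i. Suc i < n \<and> w (Suc (Suc i)) < w (Suc i)}"
      by (cases i) auto
  qed
  then show ?thesis unfolding desc_card ds by (simp add: card_image)
qed

lemma eul_cnt: "eulerian n k = cnt n (k - 1)"
proof -
  let ?phi = "\<lambda>w. map w [1..<Suc n]"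
  let ?A = "{w. w permutes {1..n} \<and> desc (?phi w) = k - 1}"
  have "eulerian n k = card ?A"
    unfolding eulerian_def phi_desc by simp
  also have "\<dots> = card (?phi ` ?A)"
    by (rule card_image[symmetric], rule inj_on_subset[OF phi_inj]) auto
  also have "?phi ` ?A = {xs \<in> Pm n. desc xs = k - 1}"
  proof (rule set_eqI, rule iffI)
    fix xs assume "xs \<in> ?phi ` ?A"
    then obtain w where "w permutes {1..n}" "desc (?phi w) = k - 1" "xs = ?phi w" by blast
    then show "xs \<in> {xs \<in> Pm n. desc xs = k - 1}" using phi_Pm by simp
  next
    fix xs assume xs: "xs \<in> {xs \<in> Pm n. desc xs = k - 1}"
    then obtain w where "w permutes {1..n}" "?phi w = xs" using phi_surj by blast
    then show "xs \<in> ?phi ` ?A" using xs by force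
  qed
  finally show ?thesis by (simp add: cnt_def)
qed

lemma cnt_big: "1 \<le> n \<Longrightarrow> n \<le> d \<Longrightarrow> cnt n d = 0"
proof -
  assume a: "1 \<le> n" "n \<le> d"
  have e: "{xs \<in> Pm n. desc xs = d} = {}"
  proof (rule equals0I)
    fix xs assume "xs \<in> {xs \<in> Pm n. desc xs = d}"
    then have "length xs = n" "desc xs = d" using Pm_length by auto
    then show False using desc_le[of xs] a by simp
  qed
  show ?thesis unfolding cnt_def e by simp
qed

lemma poly_Ef:
  assumes "1 \<le> n"
  shows "fps_of_poly (\<Sum>k=1..n. monom (real (eulerian n k)) (k - 1)) = Ef n"
proof (rule fps_ext)
  fix d
  have "coeff (\<Sum>k=1..n. monom (real (eulerian n k)) (k - 1)) d
      = (\<Sum>k\<in>{1..n}. if k - 1 = d then real (eulerian n k) else 0)"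
    by (simp add: coeff_sum)
  also have "\<dots> = (\<Sum>k\<in>{1..n}. if k = Suc d then real (eulerian n k) else 0)"
    by (rule sum.cong) auto
  also have "\<dots> = (if Suc d \<in> {1..n} then real (eulerian n (Suc d)) else 0)"
    by (rule sum.delta) simp
  also have "\<dots> = real (cnt n d)"
    using cnt_big[OF assms, of d] by (simp add: eul_cnt)
  finally show "fps_nth (fps_of_poly (\<Sum>k=1..n. monom (real (eulerian n k)) (k - 1))) d = fps_nth (Ef n) d"
    by (simp add: Ef_def)
qed

lemma rhs_eq:
  assumes "1 \<le> n"
  shows "fps_of_poly (\<Sum>k=1..n. monom (real (eulerian n k)) (k - 1)) / (1 - fps_X) ^ (n + 1) = Sf n"
proof -
  have nz: "(1 - fps_X :: real fps) ^ (n + 1) \<noteq> 0"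
  proof
    assume "(1 - fps_X :: real fps) ^ (n + 1) = 0"
    then have "fps_nth ((1 - fps_X :: real fps) ^ (n + 1)) 0 = 0" by simp
    then show False by (simp add: fps_nth_power_0)
  qed
  show ?thesis unfolding poly_Ef[OF assms] main_fps[symmetric]
    using nz by simp
qed

definition hedge :: "nat \<Rightarrow> nat \<Rightarrow> gvert \<times> gvert" where
  "hedge i j = (Grid i j, Grid i (Suc j))"
definition vedge :: "nat \<Rightarrow> nat \<Rightarrow> nat \<Rightarrow> gvert \<times> gvert" where
  "vedge n i j = (Grid i j, if i = n then Sink else Grid (Suc i) j)"

lemma G_edges_cases:
  assumes "e \<in> G_edges n m" and n1: "1 \<le> n"
  shows "(\<exists>i j. e = hedge i j \<and> 1 \<le> i \<and> i \<le> n \<and> j < m) \<or> (\<exists>i j. e = vedge n i j \<and> 1 \<le> i \<and> i \<le> n \<and> j \<le> m)"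
  using assms unfolding G_edges_def
proof (elim UnE)
  assume "e \<in> {(Grid i j, Grid i (j+1)) | i j. 1 \<le> i \<and> i \<le> n \<and> j < m}"
  then obtain i j where "e = (Grid i j, Grid i (j+1))" "1 \<le> i" "i \<le> n" "j < m" by blast
  then show ?thesis unfolding hedge_def by auto
next
  assume "e \<in> {(Grid i j, Grid (i+1) j) | i j. 1 \<le> i \<and> i \<le> n - 1 \<and> j \<le> m}"
  then obtain i j where ij: "e = (Grid i j, Grid (i+1) j)" "1 \<le> i" "i \<le> n - 1" "j \<le> m" by blast
  then have "i \<noteq> n" "i \<le> n" by auto
  then have "e = vedge n i j" using ij by (simp add: vedge_def)
  then show ?thesis using ij \<open>i \<le> n\<close> by blast
next
  assume "e \<in> {(Grid n j, Sink) | j. j \<le> m}"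
  then obtain j where j: "e = (Grid n j, Sink)" "j \<le> m" by blast
  then have "e = vedge n n j" by (simp add: vedge_def)
  then show ?thesis using j n1 by blast
qed

lemma hedge_in: "1 \<le> i \<Longrightarrow> i \<le> n \<Longrightarrow> j < m \<Longrightarrow> hedge i j \<in> G_edges n m"
  unfolding G_edges_def hedge_def by auto

lemma vedge_in: "1 \<le> i \<Longrightarrow> i \<le> n \<Longrightarrow> j \<le> m \<Longrightarrow> vedge n i j \<in> G_edges n m"
proof -
  assume a: "1 \<le> i" "i \<le> n" "j \<le> m"
  show ?thesis
  proof (cases "i = n")
    case True
    then show ?thesis using a unfolding G_edges_def vedge_def by auto
  next
    case False
    then have "(Grid i j, Grid (i+1) j) \<in> {(Grid i j, Grid (i+1) j) | i j. 1 \<le> i \<and> i \<le> n - 1 \<and> j \<le> m}"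
      using a by auto
    then show ?thesis using False unfolding G_edges_def vedge_def by auto
  qed
qed

lemma hedge_neq_vedge: "hedge i j \<noteq> vedge n i' j'"
  unfolding hedge_def vedge_def by auto

lemma hedge_inj: "hedge i j = hedge i' j' \<longleftrightarrow> i = i' \<and> j = j'"
  unfolding hedge_def by auto

lemma vedge_inj: "vedge n i j = vedge n i' j' \<longleftrightarrow> i = i' \<and> j = j'"
  unfolding vedge_def by auto

lemma out_grid:
  assumes "1 \<le> i" "i \<le> n" "j \<le> m"
  shows "{e \<in> G_edges n m. fst e = Grid i j} = (if j < m then {hedge i j} else {}) \<union> {vedge n i j}"
proof (rule set_eqI, rule iffI)
  fix e assume e: "e \<in> {e \<in> G_edges n m. fst e = Grid i j}"
  then have "e \<in> G_edges n m" "fst e = Grid i j" by auto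
  have n1: "1 \<le> n" using assms by simp
  from G_edges_cases[OF \<open>e \<in> G_edges n m\<close> n1] show "e \<in> (if j < m then {hedge i j} else {}) \<union> {vedge n i j}"
  proof (elim disjE exE conjE)
    fix i' j' assume "e = hedge i' j'" "j' < m"
    then show ?thesis using \<open>fst e = Grid i j\<close> by (auto simp: hedge_def)
  next
    fix i' j' assume "e = vedge n i' j'"
    then show ?thesis using \<open>fst e = Grid i j\<close> by (auto simp: vedge_def)
  qed
next
  fix e assume "e \<in> (if j < m then {hedge i j} else {}) \<union> {vedge n i j}"
  then show "e \<in> {e \<in> G_edges n m. fst e = Grid i j}"
    using hedge_in[of i n j m] vedge_in[of i n j m] assms
    by (cases "j < m") (auto simp: hedge_def vedge_def)
qed

lemma in_grid:
  assumes "1 \<le> i" "i \<le> n" "j \<le> m"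
  shows "{e \<in> G_edges n m. snd e = Grid i j} =
     (if 0 < j then {hedge i (j - 1)} else {}) \<union> (if 1 < i then {vedge n (i - 1) j} else {})"
proof (rule set_eqI, rule iffI)
  fix e assume e: "e \<in> {e \<in> G_edges n m. snd e = Grid i j}"
  then have "e \<in> G_edges n m" "snd e = Grid i j" by auto
  have n1: "1 \<le> n" using assms by simp
  from G_edges_cases[OF \<open>e \<in> G_edges n m\<close> n1] show "e \<in> (if 0 < j then {hedge i (j - 1)} else {}) \<union> (if 1 < i then {vedge n (i - 1) j} else {})"
  proof (elim disjE exE conjE)
    fix i' j' assume "e = hedge i' j'"
    then show ?thesis using \<open>snd e = Grid i j\<close> by (auto simp: hedge_def)
  next
    fix i' j' assume "e = vedge n i' j'" "1 \<le> i'"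
    then show ?thesis using \<open>snd e = Grid i j\<close> by (cases "i' = n") (auto simp: vedge_def)
  qed
next
  fix e assume e: "e \<in> (if 0 < j then {hedge i (j - 1)} else {}) \<union> (if 1 < i then {vedge n (i - 1) j} else {})"
  show "e \<in> {e \<in> G_edges n m. snd e = Grid i j}"
  proof (cases "e = hedge i (j - 1) \<and> 0 < j")
    case True
    then show ?thesis using hedge_in[of i n "j - 1" m] assms by (auto simp: hedge_def)
  next
    case False
    then have "e = vedge n (i - 1) j" "1 < i" using e by (auto split: if_splits)
    then show ?thesis using vedge_in[of "i - 1" n j m] assms by (auto simp: vedge_def)
  qed
qed

lemma out_sink: "1 \<le> n \<Longrightarrow> {e \<in> G_edges n m. fst e = Sink} = {}"
  using G_edges_cases[of _ n m] by (fastforce simp: hedge_def vedge_def)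

lemma in_sink:
  assumes "1 \<le> n"
  shows "{e \<in> G_edges n m. snd e = Sink} = (\<lambda>j. vedge n n j) ` {..m}"
proof (rule set_eqI, rule iffI)
  fix e assume e: "e \<in> {e \<in> G_edges n m. snd e = Sink}"
  then have "e \<in> G_edges n m" "snd e = Sink" by auto
  have n1: "1 \<le> n" using assms by simp
  from G_edges_cases[OF \<open>e \<in> G_edges n m\<close> n1] show "e \<in> (\<lambda>j. vedge n n j) ` {..m}"
  proof (elim disjE exE conjE)
    fix i' j' assume "e = hedge i' j'"
    then show ?thesis using \<open>snd e = Sink\<close> by (auto simp: hedge_def)
  next
    fix i' j' assume "e = vedge n i' j'" "j' \<le> m"
    then show ?thesis using \<open>snd e = Sink\<close> by (cases "i' = n") (auto simp: vedge_def)
  qed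
next
  fix e assume "e \<in> (\<lambda>j. vedge n n j) ` {..m}"
  then show "e \<in> {e \<in> G_edges n m. snd e = Sink}"
    using vedge_in[of n n _ m] assms by (auto simp: vedge_def)
qed

lemma G_verts_iff: "v \<in> G_verts n m \<longleftrightarrow> v = Sink \<or> (\<exists>i j. v = Grid i j \<and> 1 \<le> i \<and> i \<le> n \<and> j \<le> m)"
  unfolding G_verts_def by auto

lemma sum_out_grid:
  assumes "1 \<le> i" "i \<le> n" "j \<le> m"
  shows "(\<Sum>e\<in>{e \<in> G_edges n m. fst e = Grid i j}. F e) = (if j < m then F (hedge i j) else 0) + F (vedge n i j)"
  unfolding out_grid[OF assms] using hedge_neq_vedge[of i j n i j] by (cases "j < m") (simp_all add: ac_simps)

lemma sum_in_grid:
  assumes "1 \<le> i" "i \<le> n" "j \<le> m"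
  shows "(\<Sum>e\<in>{e \<in> G_edges n m. snd e = Grid i j}. F e) =
     (if 0 < j then F (hedge i (j - 1)) else 0) + (if 1 < i then F (vedge n (i - 1) j) else 0)"
  unfolding in_grid[OF assms] using hedge_neq_vedge[of i "j - 1" n "i - 1" j]
  by (cases "0 < j"; cases "1 < i") (simp_all add: ac_simps)

lemma sum_in_sink:
  assumes "1 \<le> n"
  shows "(\<Sum>e\<in>{e \<in> G_edges n m. snd e = Sink}. F e) = (\<Sum>j\<le>m. F (vedge n n j))"
  unfolding in_sink[OF assms]
  by (rule sum.reindex_cong[where l="\<lambda>j. vedge n n j"]) (auto simp: inj_on_def vedge_inj)

definition FP :: "nat \<Rightarrow> nat \<Rightarrow> (gvert \<times> gvert \<Rightarrow>\<^sub>0 real) set" where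
  "FP n m = flow_polytope n m (\<lambda>i. 1) (\<lambda>i. if i = 1 then 0 else 1)"

definition yv :: "nat \<Rightarrow> (gvert \<times> gvert \<Rightarrow>\<^sub>0 real) \<Rightarrow> nat \<Rightarrow> nat \<Rightarrow> real" where
  "yv n f i j = Poly_Mapping.lookup f (vedge n i j)"

definition Yc :: "(nat \<Rightarrow> nat \<Rightarrow> real) \<Rightarrow> nat \<Rightarrow> nat \<Rightarrow> real" where
  "Yc y i j = (if i = 0 then 0 else (\<Sum>k\<le>j. y i k))"

lemma Yc_0: "Yc y i 0 = (if i = 0 then 0 else y i 0)"
  by (simp add: Yc_def)

lemma Yc_Suc: "Yc y i (Suc j) = Yc y i j + (if i = 0 then 0 else y i (Suc j))"
  by (simp add: Yc_def)

lemma sum_b: "1 \<le> n \<Longrightarrow> (\<Sum>i=1..n. (if i = 1 then 0 else 1::real)) = real n - 1"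
proof -
  assume n: "1 \<le> n"
  have "(\<Sum>i=1..n. (if i = 1 then 0 else 1::real)) = (\<Sum>i=1..n. 1 - (if i = 1 then 1 else 0))"
    by (rule sum.cong) auto
  also have "\<dots> = (\<Sum>i=1..n. 1) - (\<Sum>i=1..n. (if i = 1 then 1 else 0::real))"
    by (rule sum_subtractf)
  also have "(\<Sum>i=1..n. (if i = 1 then 1 else 0::real)) = 1"
    using n by (simp add: sum.delta)
  finally show ?thesis by simp
qed

definition cons_eq :: "nat \<Rightarrow> nat \<Rightarrow> (gvert \<times> gvert \<Rightarrow>\<^sub>0 real) \<Rightarrow> nat \<Rightarrow> nat \<Rightarrow> bool" where
  "cons_eq n m f i j \<longleftrightarrow>
     (if j < m then Poly_Mapping.lookup f (hedge i j) else 0) + yv n f i j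
     - (if 0 < j then Poly_Mapping.lookup f (hedge i (j - 1)) else 0) - (if 1 < i then yv n f (i - 1) j else 0)
     = (if j = 0 then 1 else if j = m then - (if i = 1 then 0 else 1) else 0)"

lemma FP_iff:
  assumes n: "1 \<le> n"
  shows "f \<in> FP n m \<longleftrightarrow>
    (\<forall>e. e \<notin> G_edges n m \<longrightarrow> Poly_Mapping.lookup f e = 0) \<and> (\<forall>e\<in>G_edges n m. 0 \<le> Poly_Mapping.lookup f e)
    \<and> (\<forall>i j. 1 \<le> i \<longrightarrow> i \<le> n \<longrightarrow> j \<le> m \<longrightarrow> cons_eq n m f i j)
    \<and> (\<Sum>j\<le>m. yv n f n j) = 1"
proof -
  have sink: "(\<Sum>e\<in>{e\<in>G_edges n m. fst e = Sink}. Poly_Mapping.lookup f e) - (\<Sum>e\<in>{e\<in>G_edges n m. snd e = Sink}. Poly_Mapping.lookup f e)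
        = netflow_req n m (\<lambda>i. 1) (\<lambda>i. if i = 1 then 0 else 1) Sink \<longleftrightarrow> (\<Sum>j\<le>m. yv n f n j) = 1"
    unfolding out_sink[OF n] sum_in_sink[OF n] netflow_req_def using sum_b[OF n]
    by (simp add: yv_def)
  have grid: "(\<Sum>e\<in>{e\<in>G_edges n m. fst e = Grid i j}. Poly_Mapping.lookup f e) - (\<Sum>e\<in>{e\<in>G_edges n m. snd e = Grid i j}. Poly_Mapping.lookup f e)
        = netflow_req n m (\<lambda>i. 1) (\<lambda>i. if i = 1 then 0 else 1) (Grid i j) \<longleftrightarrow> cons_eq n m f i j"
    if "1 \<le> i" "i \<le> n" "j \<le> m" for i j
    unfolding sum_out_grid[OF that] sum_in_grid[OF that] netflow_req_def cons_eq_def yv_def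
    by (simp add: algebra_simps)
  have verts: "(\<forall>v\<in>G_verts n m. (\<Sum>e\<in>{e\<in>G_edges n m. fst e = v}. Poly_Mapping.lookup f e) - (\<Sum>e\<in>{e\<in>G_edges n m. snd e = v}. Poly_Mapping.lookup f e)
        = netflow_req n m (\<lambda>i. 1) (\<lambda>i. if i = 1 then 0 else 1) v) \<longleftrightarrow>
      (\<forall>i j. 1 \<le> i \<longrightarrow> i \<le> n \<longrightarrow> j \<le> m \<longrightarrow> cons_eq n m f i j) \<and> (\<Sum>j\<le>m. yv n f n j) = 1"
    (is "?L \<longleftrightarrow> ?R")
  proof
    assume L: ?L
    have "\<forall>i j. 1 \<le> i \<longrightarrow> i \<le> n \<longrightarrow> j \<le> m \<longrightarrow> cons_eq n m f i j"
    proof (intro allI impI)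
      fix i j assume ij: "1 \<le> i" "i \<le> n" "j \<le> m"
      then have "Grid i j \<in> G_verts n m" by (simp add: G_verts_iff)
      then show "cons_eq n m f i j" using L grid[OF ij] by simp
    qed
    moreover have "Sink \<in> G_verts n m" by (simp add: G_verts_iff)
    then have "(\<Sum>j\<le>m. yv n f n j) = 1" using L sink by simp
    ultimately show ?R by simp
  next
    assume R: ?R
    show ?L
    proof
      fix v assume "v \<in> G_verts n m"
      then have "v = Sink \<or> (\<exists>i j. v = Grid i j \<and> 1 \<le> i \<and> i \<le> n \<and> j \<le> m)" by (simp add: G_verts_iff)
      then show "(\<Sum>e\<in>{e\<in>G_edges n m. fst e = v}. Poly_Mapping.lookup f e) - (\<Sum>e\<in>{e\<in>G_edges n m. snd e = v}. Poly_Mapping.lookup f e)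
        = netflow_req n m (\<lambda>i. 1) (\<lambda>i. if i = 1 then 0 else 1) v"
      proof (elim disjE exE conjE)
        assume "v = Sink" then show ?thesis using R sink by simp
      next
        fix i j assume "v = Grid i j" "1 \<le> i" "i \<le> n" "j \<le> m"
        then show ?thesis using R grid[of i j] by simp
      qed
    qed
  qed
  show ?thesis unfolding FP_def flow_polytope_def mem_Collect_eq verts by simp
qed

lemma FP_cons: "1 \<le> n \<Longrightarrow> f \<in> FP n m \<Longrightarrow> 1 \<le> i \<Longrightarrow> i \<le> n \<Longrightarrow> j \<le> m \<Longrightarrow> cons_eq n m f i j"
  using FP_iff by blast

lemma FP_supp: "f \<in> FP n m \<Longrightarrow> e \<notin> G_edges n m \<Longrightarrow> Poly_Mapping.lookup f e = 0"
  unfolding FP_def flow_polytope_def by blast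

lemma FP_nonneg_e: "f \<in> FP n m \<Longrightarrow> e \<in> G_edges n m \<Longrightarrow> 0 \<le> Poly_Mapping.lookup f e"
  unfolding FP_def flow_polytope_def by blast

lemma FP_nonneg: "1 \<le> n \<Longrightarrow> f \<in> FP n m \<Longrightarrow> 1 \<le> i \<Longrightarrow> i \<le> n \<Longrightarrow> j \<le> m \<Longrightarrow> 0 \<le> yv n f i j"
  unfolding yv_def using FP_iff vedge_in by blast

lemma FP_H:
  assumes n: "1 \<le> n" and f: "f \<in> FP n m" and i: "1 \<le> i" "i \<le> n"
  shows "j < m \<Longrightarrow> Poly_Mapping.lookup f (hedge i j) = 1 + Yc (yv n f) (i - 1) j - Yc (yv n f) i j"
proof (induction j)
  case 0
  have "cons_eq n m f i 0" using FP_cons[OF n f i] by simp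
  then show ?case using 0 i by (cases "i = 1") (simp_all add: cons_eq_def Yc_0)
next
  case (Suc j)
  have c: "cons_eq n m f i (Suc j)" using FP_cons[OF n f i] Suc.prems by simp
  have IH: "Poly_Mapping.lookup f (hedge i j) = 1 + Yc (yv n f) (i - 1) j - Yc (yv n f) i j" using Suc by simp
  show ?case using c IH Suc.prems i by (cases "i = 1") (simp_all add: cons_eq_def Yc_Suc)
qed

lemma FP_row_step:
  assumes n: "1 \<le> n" and m: "1 \<le> m" and f: "f \<in> FP n m" and i: "1 \<le> i" "i \<le> n"
  shows "Yc (yv n f) i m = 1 + Yc (yv n f) (i - 1) m - (if i = 1 then 0 else 1)"
proof -
  obtain k where k: "m = Suc k" using m by (cases m) auto
  have c: "cons_eq n m f i m" using FP_cons[OF n f i] by simp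
  have H: "Poly_Mapping.lookup f (hedge i k) = 1 + Yc (yv n f) (i - 1) k - Yc (yv n f) i k"
    using FP_H[OF n f i, of k] k by simp
  show ?thesis using c H i unfolding k by (cases "i = 1") (simp_all add: cons_eq_def Yc_Suc)
qed

lemma FP_row:
  assumes n: "1 \<le> n" and m: "1 \<le> m" and f: "f \<in> FP n m"
  shows "1 \<le> i \<Longrightarrow> i \<le> n \<Longrightarrow> Yc (yv n f) i m = 1"
proof (induction i)
  case 0 then show ?case by simp
next
  case (Suc k)
  show ?case
  proof (cases "k = 0")
    case True
    then show ?thesis using FP_row_step[OF n m f, of 1] n by (simp add: Yc_def)
  next
    case False
    then have "Yc (yv n f) k m = 1" using Suc by simp
    then show ?thesis using FP_row_step[OF n m f, of "Suc k"] Suc.prems False by simp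
  qed
qed

lemma FP_unique:
  assumes n: "1 \<le> n" and f: "f \<in> FP n m" and g: "g \<in> FP n m"
    and eq: "\<And>i j. 1 \<le> i \<Longrightarrow> i \<le> n \<Longrightarrow> j \<le> m \<Longrightarrow> yv n f i j = yv n g i j"
  shows "f = g"
proof (rule poly_mapping_eqI)
  fix e
  have Yeq: "Yc (yv n f) k j = Yc (yv n g) k j" if "k \<le> n" "j \<le> m" for k j
  proof (cases "k = 0")
    case True then show ?thesis by (simp add: Yc_def)
  next
    case False
    have "(\<Sum>l\<le>j. yv n f k l) = (\<Sum>l\<le>j. yv n g k l)"
    proof (rule sum.cong[OF refl])
      fix l assume "l \<in> {..j}"
      then show "yv n f k l = yv n g k l" using eq[of k l] False that by simp
    qed
    then show ?thesis unfolding Yc_def using False by simp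
  qed
  show "Poly_Mapping.lookup f e = Poly_Mapping.lookup g e"
  proof (cases "e \<in> G_edges n m")
    case False
    then show ?thesis using FP_supp[OF f] FP_supp[OF g] by simp
  next
    case True
    from G_edges_cases[OF True n] show ?thesis
    proof (elim disjE exE conjE)
      fix i j assume e: "e = hedge i j" "1 \<le> i" "i \<le> n" "j < m"
      then show ?thesis using FP_H[OF n f, of i j] FP_H[OF n g, of i j] Yeq[of "i - 1" j] Yeq[of i j] by simp
    next
      fix i j assume e: "e = vedge n i j" "1 \<le> i" "i \<le> n" "j \<le> m"
      then show ?thesis using eq[of i j] by (simp add: yv_def)
    qed
  qed
qed

definition bval :: "(nat \<Rightarrow> nat \<Rightarrow> real) \<Rightarrow> gvert \<times> gvert \<Rightarrow> real" where
  "bval y e = (case e of (Grid i j, Grid i' j') \<Rightarrow> if i' = i then 1 + Yc y (i - 1) j - Yc y i j else y i j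
     | (Grid i j, Sink) \<Rightarrow> y i j | (Sink, _) \<Rightarrow> 0)"

definition build :: "nat \<Rightarrow> nat \<Rightarrow> (nat \<Rightarrow> nat \<Rightarrow> real) \<Rightarrow> (gvert \<times> gvert \<Rightarrow>\<^sub>0 real)" where
  "build n m y = Abs_poly_mapping (\<lambda>e. if e \<in> G_edges n m then bval y e else 0)"

lemma finite_G_edges:
  assumes n: "1 \<le> n"
  shows "finite (G_edges n m)"
proof (rule finite_subset)
  show "G_edges n m \<subseteq> (\<lambda>(i,j). hedge i j) ` ({1..n} \<times> {..<m}) \<union> (\<lambda>(i,j). vedge n i j) ` ({1..n} \<times> {..m})"
  proof
    fix e assume e: "e \<in> G_edges n m"
    from G_edges_cases[OF e n] show "e \<in> (\<lambda>(i,j). hedge i j) ` ({1..n} \<times> {..<m}) \<union> (\<lambda>(i,j). vedge n i j) ` ({1..n} \<times> {..m})"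
    proof (elim disjE exE conjE)
      fix i j assume "e = hedge i j" "1 \<le> i" "i \<le> n" "j < m"
      then show ?thesis by (intro UnI1 image_eqI[where x="(i,j)"]) auto
    next
      fix i j assume "e = vedge n i j" "1 \<le> i" "i \<le> n" "j \<le> m"
      then show ?thesis by (intro UnI2 image_eqI[where x="(i,j)"]) auto
    qed
  qed
  show "finite ((\<lambda>(i,j). hedge i j) ` ({1..n} \<times> {..<m}) \<union> (\<lambda>(i,j). vedge n i j) ` ({1..n} \<times> {..m}))"
    by simp
qed

lemma lookup_build:
  assumes n: "1 \<le> n"
  shows "Poly_Mapping.lookup (build n m y) e = (if e \<in> G_edges n m then bval y e else 0)"
proof -
  have "finite {e. (if e \<in> G_edges n m then bval y e else 0) \<noteq> 0}"
    by (rule finite_subset[OF _ finite_G_edges[OF n, of m]]) auto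
  then show ?thesis unfolding build_def by simp
qed

lemma bval_h: "bval y (hedge i j) = 1 + Yc y (i - 1) j - Yc y i j"
  by (simp add: bval_def hedge_def)

lemma bval_v: "bval y (vedge n i j) = y i j"
  by (cases "i = n") (simp_all add: bval_def vedge_def)

lemma yv_build: "1 \<le> n \<Longrightarrow> 1 \<le> i \<Longrightarrow> i \<le> n \<Longrightarrow> j \<le> m \<Longrightarrow> yv n (build n m y) i j = y i j"
  unfolding yv_def using vedge_in[of i n j m] by (simp add: lookup_build bval_v)

lemma hl_build: "1 \<le> n \<Longrightarrow> 1 \<le> i \<Longrightarrow> i \<le> n \<Longrightarrow> j < m \<Longrightarrow>
   Poly_Mapping.lookup (build n m y) (hedge i j) = 1 + Yc y (i - 1) j - Yc y i j"
  using hedge_in[of i n j m] by (simp add: lookup_build bval_h)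

definition Simp :: "nat \<Rightarrow> nat \<Rightarrow> (nat \<Rightarrow> nat \<Rightarrow> real) \<Rightarrow> bool" where
  "Simp n m y \<longleftrightarrow> (\<forall>i j. 1 \<le> i \<longrightarrow> i \<le> n \<longrightarrow> j \<le> m \<longrightarrow> 0 \<le> y i j) \<and> (\<forall>i. 1 \<le> i \<longrightarrow> i \<le> n \<longrightarrow> Yc y i m = 1)"

lemma Yc_ge: "Simp n m y \<Longrightarrow> i \<le> n \<Longrightarrow> j \<le> m \<Longrightarrow> 0 \<le> Yc y i j"
  unfolding Yc_def Simp_def by (auto intro!: sum_nonneg)

lemma Yc_le: 
  assumes "Simp n m y" "1 \<le> i" "i \<le> n" "j \<le> m"
  shows "Yc y i j \<le> 1"
proof -
  have "(\<Sum>k\<le>j. y i k) \<le> (\<Sum>k\<le>m. y i k)"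
    by (rule sum_mono2) (use assms in \<open>auto simp: Simp_def\<close>)
  also have "\<dots> = 1" using assms by (simp add: Simp_def Yc_def)
  finally show ?thesis using assms by (simp add: Yc_def)
qed

lemma build_FP:
  assumes n: "1 \<le> n" and m: "1 \<le> m" and y: "Simp n m y"
  shows "build n m y \<in> FP n m"
proof -
  let ?f = "build n m y"
  have supp: "\<forall>e. e \<notin> G_edges n m \<longrightarrow> Poly_Mapping.lookup ?f e = 0"
    by (simp add: lookup_build[OF n])
  have nonneg: "\<forall>e\<in>G_edges n m. 0 \<le> Poly_Mapping.lookup ?f e"
  proof
    fix e assume e: "e \<in> G_edges n m"
    from G_edges_cases[OF e n] show "0 \<le> Poly_Mapping.lookup ?f e"
    proof (elim disjE exE conjE)
      fix i j assume ij: "e = hedge i j" "1 \<le> i" "i \<le> n" "j < m"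
      have "0 \<le> Yc y (i - 1) j" using Yc_ge[OF y, of "i - 1" j] ij by simp
      moreover have "Yc y i j \<le> 1" using Yc_le[OF y, of i j] ij by simp
      ultimately show ?thesis using ij hl_build[OF n, of i j m y] by simp
    next
      fix i j assume ij: "e = vedge n i j" "1 \<le> i" "i \<le> n" "j \<le> m"
      then show ?thesis using y yv_build[OF n, of i j m y] by (simp add: Simp_def yv_def)
    qed
  qed
  have cons: "\<forall>i j. 1 \<le> i \<longrightarrow> i \<le> n \<longrightarrow> j \<le> m \<longrightarrow> cons_eq n m ?f i j"
  proof (intro allI impI)
    fix i j assume i1: "1 \<le> i" and i2: "i \<le> n" and j: "j \<le> m"
    have yv1: "yv n ?f i j = y i j" using yv_build[OF n i1 i2 j] .
    have yv2: "1 < i \<Longrightarrow> yv n ?f (i - 1) j = y (i - 1) j" using yv_build[OF n, of "i - 1" j m y] i2 j by simp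
    show "cons_eq n m ?f i j"
    proof (cases "j = 0")
      case True
      have h: "Poly_Mapping.lookup ?f (hedge i 0) = 1 + Yc y (i - 1) 0 - Yc y i 0"
        using hl_build[OF n i1 i2, of 0 m y] m by simp
      show ?thesis using True m h yv1 yv2 i1 by (cases "i = 1") (simp_all add: cons_eq_def Yc_0)
    next
      case False
      then obtain k where k: "j = Suc k" by (cases j) auto
      have hk: "Poly_Mapping.lookup ?f (hedge i k) = 1 + Yc y (i - 1) k - Yc y i k"
        using hl_build[OF n i1 i2, of k m y] j k by simp
      show ?thesis
      proof (cases "j = m")
        case True
        have r1: "Yc y i (Suc k) = 1" using y i1 i2 True k by (simp add: Simp_def)
        have r2: "Yc y (i - 1) (Suc k) = (if i = 1 then 0 else 1)"
          using y i1 i2 True k by (auto simp: Simp_def Yc_def)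
        have mk: "m = Suc k" using True k by simp
        have yv1': "yv n (build n (Suc k) y) i (Suc k) = y i (Suc k)" using yv1 mk k by simp
        have yv2': "1 < i \<Longrightarrow> yv n (build n (Suc k) y) (i - 1) (Suc k) = y (i - 1) (Suc k)" using yv2 mk k by simp
        have hk': "Poly_Mapping.lookup (build n (Suc k) y) (hedge i k) = 1 + Yc y (i - 1) k - Yc y i k"
          using hk mk by simp
        show ?thesis unfolding mk k using hk' yv1' yv2' i1 r1 r2
          by (cases "i = 1") (simp_all add: cons_eq_def Yc_Suc)
      next
        case F2: False
        have hj: "Poly_Mapping.lookup ?f (hedge i j) = 1 + Yc y (i - 1) j - Yc y i j"
          using hl_build[OF n i1 i2, of j m y] j F2 by simp
        show ?thesis using F2 False k hk hj yv1 yv2 i1 j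
          by (cases "i = 1") (simp_all add: cons_eq_def Yc_Suc)
      qed
    qed
  qed
  have sink: "(\<Sum>j\<le>m. yv n ?f n j) = 1"
  proof -
    have "(\<Sum>j\<le>m. yv n ?f n j) = (\<Sum>j\<le>m. y n j)"
      by (rule sum.cong[OF refl]) (use yv_build[OF n, of n _ m y] n in simp)
    also have "\<dots> = Yc y n m" using n by (simp add: Yc_def)
    also have "\<dots> = 1" using y n by (simp add: Simp_def)
    finally show ?thesis .
  qed
  show ?thesis using FP_iff[OF n] supp nonneg cons sink by blast
qed

lemma lookup_scaleR: "Poly_Mapping.lookup (r *\<^sub>R f) e = r * Poly_Mapping.lookup f e"
proof -
  have fin: "finite {i. r *\<^sub>R Poly_Mapping.lookup f i \<noteq> 0}"
    by (rule finite_subset[OF _ finite_lookup[of f]]) auto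
  show ?thesis unfolding scaleR_poly_mapping_def using fin by simp
qed

lemma lookup_comb: "Poly_Mapping.lookup ((1 - u) *\<^sub>R f + u *\<^sub>R g) e
   = (1 - u) * Poly_Mapping.lookup f e + u * Poly_Mapping.lookup g e"
  by (simp add: lookup_add lookup_scaleR)

lemma yv_comb: "yv n ((1 - u) *\<^sub>R f + u *\<^sub>R g) i j = (1 - u) * yv n f i j + u * yv n g i j"
  unfolding yv_def by (rule lookup_comb)

lemma FP_convex:
  assumes f: "f \<in> FP n m" and g: "g \<in> FP n m" and u: "0 \<le> u" "u \<le> 1"
  shows "(1 - u) *\<^sub>R f + u *\<^sub>R g \<in> FP n m"
proof -
  let ?h = "(1 - u) *\<^sub>R f + u *\<^sub>R g"
  let ?r = "netflow_req n m (\<lambda>i. 1) (\<lambda>i. if i = 1 then 0 else 1)"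
  have F: "(\<forall>e. e \<notin> G_edges n m \<longrightarrow> Poly_Mapping.lookup f e = 0)
       \<and> (\<forall>e\<in>G_edges n m. 0 \<le> Poly_Mapping.lookup f e)
       \<and> (\<forall>v\<in>G_verts n m.
            (\<Sum>e\<in>{e\<in>G_edges n m. fst e = v}. Poly_Mapping.lookup f e)
          - (\<Sum>e\<in>{e\<in>G_edges n m. snd e = v}. Poly_Mapping.lookup f e) = ?r v)"
    using f unfolding FP_def flow_polytope_def by simp
  have G: "(\<forall>e. e \<notin> G_edges n m \<longrightarrow> Poly_Mapping.lookup g e = 0)
       \<and> (\<forall>e\<in>G_edges n m. 0 \<le> Poly_Mapping.lookup g e)
       \<and> (\<forall>v\<in>G_verts n m.
            (\<Sum>e\<in>{e\<in>G_edges n m. fst e = v}. Poly_Mapping.lookup g e)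
          - (\<Sum>e\<in>{e\<in>G_edges n m. snd e = v}. Poly_Mapping.lookup g e) = ?r v)"
    using g unfolding FP_def flow_polytope_def by simp
  have sm: "(\<Sum>e\<in>A. Poly_Mapping.lookup ?h e) = (1 - u) * (\<Sum>e\<in>A. Poly_Mapping.lookup f e) + u * (\<Sum>e\<in>A. Poly_Mapping.lookup g e)" for A
    by (simp add: lookup_comb sum.distrib sum_distrib_left)
  have "\<forall>e. e \<notin> G_edges n m \<longrightarrow> Poly_Mapping.lookup ?h e = 0"
    using F G by (simp add: lookup_comb)
  moreover have "\<forall>e\<in>G_edges n m. 0 \<le> Poly_Mapping.lookup ?h e"
    using F G u by (simp add: lookup_comb)
  moreover have "\<forall>v\<in>G_verts n m.
            (\<Sum>e\<in>{e\<in>G_edges n m. fst e = v}. Poly_Mapping.lookup ?h e)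
          - (\<Sum>e\<in>{e\<in>G_edges n m. snd e = v}. Poly_Mapping.lookup ?h e) = ?r v"
  proof
    fix v assume v: "v \<in> G_verts n m"
    define a where "a = (\<Sum>e\<in>{e\<in>G_edges n m. fst e = v}. Poly_Mapping.lookup f e)"
    define b where "b = (\<Sum>e\<in>{e\<in>G_edges n m. snd e = v}. Poly_Mapping.lookup f e)"
    define c where "c = (\<Sum>e\<in>{e\<in>G_edges n m. fst e = v}. Poly_Mapping.lookup g e)"
    define d where "d = (\<Sum>e\<in>{e\<in>G_edges n m. snd e = v}. Poly_Mapping.lookup g e)"
    have ab: "a - b = ?r v" using F v by (simp add: a_def b_def)
    have cd: "c - d = ?r v" using G v by (simp add: c_def d_def)
    have "(\<Sum>e\<in>{e\<in>G_edges n m. fst e = v}. Poly_Mapping.lookup ?h e)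
          - (\<Sum>e\<in>{e\<in>G_edges n m. snd e = v}. Poly_Mapping.lookup ?h e)
          = ((1 - u) * a + u * c) - ((1 - u) * b + u * d)"
      unfolding sm a_def b_def c_def d_def ..
    also have "\<dots> = (1 - u) * (a - b) + u * (c - d)" by (simp add: algebra_simps)
    also have "\<dots> = ?r v" unfolding ab cd by (simp add: algebra_simps)
    finally show "(\<Sum>e\<in>{e\<in>G_edges n m. fst e = v}. Poly_Mapping.lookup ?h e)
          - (\<Sum>e\<in>{e\<in>G_edges n m. snd e = v}. Poly_Mapping.lookup ?h e) = ?r v" .
  qed
  ultimately show ?thesis unfolding FP_def flow_polytope_def by simp
qed

lemma yv_le1:
  assumes n: "1 \<le> n" and m: "1 \<le> m" and f: "f \<in> FP n m" and i: "1 \<le> i" "i \<le> n" and j: "j \<le> m"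
  shows "yv n f i j \<le> 1"
proof -
  have "yv n f i j \<le> (\<Sum>k\<le>m. yv n f i k)"
    by (rule member_le_sum) (use j FP_nonneg[OF n f i] in auto)
  also have "\<dots> = Yc (yv n f) i m" using i by (simp add: Yc_def)
  also have "\<dots> = 1" using FP_row[OF n m f i] .
  finally show ?thesis .
qed

lemma conv01:
  fixes u A B c :: real
  assumes u: "0 < u" "u < 1" and A: "0 \<le> A" "A \<le> 1" and B: "0 \<le> B" "B \<le> 1"
    and eq: "(1 - u) * A + u * B = c" and c: "c = 0 \<or> c = 1"
  shows "A = c \<and> B = c"
  using c
proof
  assume c0: "c = 0"
  have p1: "0 \<le> (1 - u) * A" using u A by simp
  have p2: "0 \<le> u * B" using u B by simp
  have "(1 - u) * A = 0" "u * B = 0" using p1 p2 eq c0 by linarith+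
  then show ?thesis using u c0 by simp
next
  assume c1: "c = 1"
  have p1: "0 \<le> (1 - u) * (1 - A)" using u A by simp
  have p2: "0 \<le> u * (1 - B)" using u B by simp
  have "(1 - u) * (1 - A) + u * (1 - B) = 0" using eq c1 by (simp add: algebra_simps)
  then have "(1 - u) * (1 - A) = 0" "u * (1 - B) = 0" using p1 p2 by linarith+
  then show ?thesis using u c1 by simp
qed

lemma ext_if:
  assumes n: "1 \<le> n" and m: "1 \<le> m" and f: "f \<in> FP n m"
    and z: "\<And>i j. 1 \<le> i \<Longrightarrow> i \<le> n \<Longrightarrow> j \<le> m \<Longrightarrow> yv n f i j = 0 \<or> yv n f i j = 1"
  shows "f extreme_point_of FP n m"
  unfolding extreme_point_of_def
proof (intro conjI ballI)
  show "f \<in> FP n m" by (rule f)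
next
  fix a b assume a: "a \<in> FP n m" and b: "b \<in> FP n m"
  show "f \<notin> open_segment a b"
  proof
    assume "f \<in> open_segment a b"
    then obtain u where ab: "a \<noteq> b" and u: "0 < u" "u < 1" and fe: "f = (1 - u) *\<^sub>R a + u *\<^sub>R b"
      unfolding in_segment by blast
    have eq: "yv n a i j = yv n b i j" if ij: "1 \<le> i" "i \<le> n" "j \<le> m" for i j
    proof -
      have "(1 - u) * yv n a i j + u * yv n b i j = yv n f i j" using fe yv_comb by simp
      from conv01[OF u FP_nonneg[OF n a ij] yv_le1[OF n m a ij] FP_nonneg[OF n b ij] yv_le1[OF n m b ij] this z[OF ij]]
      show ?thesis by simp
    qed
    have "a = b" by (rule FP_unique[OF n a b eq])
    then show False using ab by simp
  qed
qed

lemma ext_only_if: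
  assumes n: "1 \<le> n" and m: "1 \<le> m" and ext: "f extreme_point_of FP n m"
    and ij: "1 \<le> i" "i \<le> n" "j \<le> m"
  shows "yv n f i j = 0 \<or> yv n f i j = 1"
proof (rule ccontr)
  assume nz: "\<not> (yv n f i j = 0 \<or> yv n f i j = 1)"
  have f: "f \<in> FP n m" using ext by (simp add: extreme_point_of_def)
  define y where "y = yv n f"
  have y0: "\<And>k l. 1 \<le> k \<Longrightarrow> k \<le> n \<Longrightarrow> l \<le> m \<Longrightarrow> 0 \<le> y k l" unfolding y_def using FP_nonneg[OF n f] by simp
  have ysum: "\<And>k. 1 \<le> k \<Longrightarrow> k \<le> n \<Longrightarrow> Yc y k m = 1" unfolding y_def using FP_row[OF n m f] by simp
  have pos: "0 < y i j" using y0[OF ij] nz by (simp add: y_def)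
  have lt1: "y i j < 1" using yv_le1[OF n m f ij] nz by (simp add: y_def)
  have "\<exists>j2. j2 \<le> m \<and> j2 \<noteq> j \<and> 0 < y i j2"
  proof (rule ccontr)
    assume "\<not> (\<exists>j2. j2 \<le> m \<and> j2 \<noteq> j \<and> 0 < y i j2)"
    then have z: "\<And>k. k \<le> m \<Longrightarrow> k \<noteq> j \<Longrightarrow> y i k = 0" using y0[OF ij(1,2)] by force
    have "(\<Sum>k\<le>m. y i k) = (\<Sum>k\<le>m. if k = j then y i j else 0)"
      by (rule sum.cong[OF refl]) (use z in auto)
    also have "\<dots> = y i j" using ij by (simp add: sum.delta)
    finally have "Yc y i m = y i j" using ij by (simp add: Yc_def)
    then show False using ysum[OF ij(1,2)] lt1 by simp
  qed
  then obtain j2 where j2: "j2 \<le> m" "j2 \<noteq> j" "0 < y i j2" by blast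
  define \<epsilon> where "\<epsilon> = min (y i j) (y i j2)"
  have e0: "0 < \<epsilon>" using pos j2 by (simp add: \<epsilon>_def)
  have e1: "\<epsilon> \<le> y i j" "\<epsilon> \<le> y i j2" by (simp_all add: \<epsilon>_def)
  define d where "d = (\<lambda>k l. if k = i \<and> l = j then \<epsilon> else if k = i \<and> l = j2 then - \<epsilon> else (0::real))"
  define y1 where "y1 = (\<lambda>k l. y k l + d k l)"
  define y2 where "y2 = (\<lambda>k l. y k l - d k l)"
  have dsum: "(\<Sum>l\<le>m. d k l) = 0" for k
  proof (cases "k = i")
    case True
    have "(\<Sum>l\<le>m. d k l) = (\<Sum>l\<le>m. (if l = j then \<epsilon> else 0) + (if l = j2 then - \<epsilon> else 0))"
      by (rule sum.cong[OF refl]) (use True j2 in \<open>auto simp: d_def\<close>)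
    also have "\<dots> = 0" using ij j2 by (simp add: sum.distrib sum.delta)
    finally show ?thesis .
  next
    case False then show ?thesis by (simp add: d_def)
  qed
  have S1: "Simp n m y1"
    unfolding Simp_def
  proof (intro conjI allI impI)
    fix k l assume kl: "1 \<le> k" "k \<le> n" "l \<le> m"
    show "0 \<le> y1 k l" using y0[OF kl] e0 e1 by (auto simp: y1_def d_def)
  next
    fix k assume k: "1 \<le> k" "k \<le> n"
    have "Yc y1 k m = Yc y k m + (\<Sum>l\<le>m. d k l)" using k by (simp add: Yc_def y1_def sum.distrib)
    then show "Yc y1 k m = 1" using ysum[OF k] dsum by simp
  qed
  have S2: "Simp n m y2"
    unfolding Simp_def
  proof (intro conjI allI impI)
    fix k l assume kl: "1 \<le> k" "k \<le> n" "l \<le> m"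
    show "0 \<le> y2 k l" using y0[OF kl] e0 e1 by (auto simp: y2_def d_def)
  next
    fix k assume k: "1 \<le> k" "k \<le> n"
    have "Yc y2 k m = Yc y k m - (\<Sum>l\<le>m. d k l)" using k by (simp add: Yc_def y2_def sum_subtractf)
    then show "Yc y2 k m = 1" using ysum[OF k] dsum by simp
  qed
  define g where "g = build n m y1"
  define h where "h = build n m y2"
  have g: "g \<in> FP n m" unfolding g_def by (rule build_FP[OF n m S1])
  have h: "h \<in> FP n m" unfolding h_def by (rule build_FP[OF n m S2])
  have gh: "g \<noteq> h"
  proof
    assume "g = h"
    then have "yv n g i j = yv n h i j" by simp
    then have "y1 i j = y2 i j" unfolding g_def h_def using yv_build[OF n ij] by simp
    then show False using e0 by (simp add: y1_def y2_def d_def)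
  qed
  define mid where "mid = (1 - 1/2) *\<^sub>R g + (1/2::real) *\<^sub>R h"
  have mid: "mid \<in> FP n m" unfolding mid_def by (rule FP_convex[OF g h]) simp_all
  have "mid = f"
  proof (rule FP_unique[OF n mid f])
    fix k l assume kl: "1 \<le> k" "k \<le> n" "l \<le> m"
    have "yv n mid k l = (1 - 1/2) * y1 k l + 1/2 * y2 k l"
      unfolding mid_def yv_comb g_def h_def using yv_build[OF n kl] by simp
    also have "\<dots> = y k l" by (simp add: y1_def y2_def algebra_simps)
    finally show "yv n mid k l = yv n f k l" by (simp add: y_def)
  qed
  then have "f \<in> open_segment g h"
    unfolding in_segment using gh by (intro conjI exI[where x="1/2"]) (simp_all add: mid_def)
  then show False using ext g h by (simp add: extreme_point_of_def)
qed

definition dl :: "(nat \<Rightarrow> nat) \<Rightarrow> nat \<Rightarrow> nat \<Rightarrow> real" where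
  "dl c i j = (if j = c i then 1 else 0)"

lemma dl_Simp:
  assumes c: "c \<in> PiE {1..n} (\<lambda>_. {..m})"
  shows "Simp n m (dl c)"
  unfolding Simp_def
proof (intro conjI allI impI)
  fix i j show "0 \<le> dl c i j" by (simp add: dl_def)
next
  fix i assume i: "1 \<le> i" "i \<le> n"
  then have "c i \<le> m" using c by (auto simp: PiE_iff)
  then show "Yc (dl c) i m = 1" using i by (simp add: Yc_def dl_def sum.delta)
qed

lemma ext_set:
  assumes n: "1 \<le> n" and m: "1 \<le> m"
  shows "{f. f extreme_point_of FP n m} = (\<lambda>c. build n m (dl c)) ` PiE {1..n} (\<lambda>_. {..m})"
proof (rule set_eqI, rule iffI)
  fix f assume "f \<in> {f. f extreme_point_of FP n m}"
  then have ext: "f extreme_point_of FP n m" by simp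
  then have f: "f \<in> FP n m" by (simp add: extreme_point_of_def)
  have z: "\<And>i j. 1 \<le> i \<Longrightarrow> i \<le> n \<Longrightarrow> j \<le> m \<Longrightarrow> yv n f i j = 0 \<or> yv n f i j = 1"
    using ext_only_if[OF n m ext] by blast
  have ex1: "\<exists>j. j \<le> m \<and> yv n f i j = 1" if i: "1 \<le> i" "i \<le> n" for i
  proof (rule ccontr)
    assume "\<not> (\<exists>j. j \<le> m \<and> yv n f i j = 1)"
    then have "\<And>j. j \<in> {..m} \<Longrightarrow> yv n f i j = 0" using z[OF i] by auto
    then have "(\<Sum>j\<le>m. yv n f i j) = 0" by simp
    moreover have "Yc (yv n f) i m = 1" using FP_row[OF n m f i] .
    ultimately show False using i by (simp add: Yc_def)
  qed
  define c where "c = (\<lambda>i. if i \<in> {1..n} then (SOME j. j \<le> m \<and> yv n f i j = 1) else undefined)"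
  have ci: "c i \<le> m \<and> yv n f i (c i) = 1" if i: "1 \<le> i" "i \<le> n" for i
  proof -
    have "c i = (SOME j. j \<le> m \<and> yv n f i j = 1)" using i by (simp add: c_def)
    then show ?thesis using someI_ex[OF ex1[OF i]] by simp
  qed
  have cP: "c \<in> PiE {1..n} (\<lambda>_. {..m})"
    unfolding PiE_iff using ci by (auto simp: c_def extensional_def)
  have "f = build n m (dl c)"
  proof (rule FP_unique[OF n f build_FP[OF n m dl_Simp[OF cP]]])
    fix i j assume ij: "1 \<le> i" "i \<le> n" "j \<le> m"
    have "yv n f i j = dl c i j"
    proof (cases "j = c i")
      case True then show ?thesis using ci[OF ij(1,2)] by (simp add: dl_def)
    next
      case False
      have "yv n f i j \<noteq> 1"
      proof
        assume y1: "yv n f i j = 1"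
        have "(\<Sum>k\<in>{j, c i}. yv n f i k) \<le> (\<Sum>k\<le>m. yv n f i k)"
          by (rule sum_mono2) (use ij ci[OF ij(1,2)] FP_nonneg[OF n f ij(1,2)] in auto)
        also have "\<dots> = 1" using FP_row[OF n m f ij(1,2)] ij by (simp add: Yc_def)
        finally show False using y1 ci[OF ij(1,2)] False by simp
      qed
      then show ?thesis using z[OF ij] False by (simp add: dl_def)
    qed
    then show "yv n f i j = yv n (build n m (dl c)) i j" using yv_build[OF n ij] by simp
  qed
  then show "f \<in> (\<lambda>c. build n m (dl c)) ` PiE {1..n} (\<lambda>_. {..m})" using cP by blast
next
  fix f assume "f \<in> (\<lambda>c. build n m (dl c)) ` PiE {1..n} (\<lambda>_. {..m})"
  then obtain c where c: "c \<in> PiE {1..n} (\<lambda>_. {..m})" and fe: "f = build n m (dl c)" by blast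
  have f: "f \<in> FP n m" unfolding fe by (rule build_FP[OF n m dl_Simp[OF c]])
  have "f extreme_point_of FP n m"
  proof (rule ext_if[OF n m f])
    fix i j assume ij: "1 \<le> i" "i \<le> n" "j \<le> m"
    show "yv n f i j = 0 \<or> yv n f i j = 1" unfolding fe using yv_build[OF n ij] by (simp add: dl_def)
  qed
  then show "f \<in> {f. f extreme_point_of FP n m}" by simp
qed

lemma build_inj:
  assumes n: "1 \<le> n"
  shows "inj_on (\<lambda>c. build n m (dl c)) (PiE {1..n} (\<lambda>_. {..m}))"
proof (rule inj_onI)
  fix c c' assume c: "c \<in> PiE {1..n} (\<lambda>_. {..m})" and c': "c' \<in> PiE {1..n} (\<lambda>_. {..m})"
    and eq: "build n m (dl c) = build n m (dl c')"
  show "c = c'"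
  proof (rule PiE_ext[OF c c'])
    fix i assume i: "i \<in> {1..n}"
    then have ci: "c i \<le> m" using c by (auto simp: PiE_iff)
    have i1: "1 \<le> i" "i \<le> n" using i by auto
    have "dl c i (c i) = dl c' i (c i)"
      using yv_build[OF n i1 ci, of "dl c"] yv_build[OF n i1 ci, of "dl c'"] eq by simp
    then show "c i = c' i" by (simp add: dl_def split: if_splits)
  qed
qed

lemma num_vertices_eq:
  assumes n: "1 \<le> n"
  shows "num_vertices n m (\<lambda>i. 1) (\<lambda>i. if i = 1 then 0 else 1) = Suc m ^ n"
proof (cases "m = 0")
  case True then show ?thesis by (simp add: num_vertices_def)
next
  case False
  then have m: "1 \<le> m" by simp
  have "num_vertices n m (\<lambda>i. 1) (\<lambda>i. if i = 1 then 0 else 1) = card {f. f extreme_point_of FP n m}"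
    using False by (simp add: num_vertices_def FP_def)
  also have "\<dots> = card (PiE {1..n} (\<lambda>_. {..m}))"
    unfolding ext_set[OF n m] by (rule card_image[OF build_inj[OF n]])
  also have "\<dots> = Suc m ^ n" by (simp add: card_PiE)
  finally show ?thesis .
qed

theorem proposition7p8:
  fixes n :: nat
  assumes "n \<ge> 1"
  shows "Abs_fps (\<lambda>m. real (num_vertices n m (\<lambda>i. 1) (\<lambda>i. if i = 1 then 0 else 1)))
       = fps_of_poly (\<Sum>k=1..n. monom (real (eulerian n k)) (k - 1)) / (1 - fps_X) ^ (n + 1)"
proof -
  have "Abs_fps (\<lambda>m. real (num_vertices n m (\<lambda>i. 1) (\<lambda>i. if i = 1 then 0 else 1))) = Sf n"
    unfolding Sf_def using num_vertices_eq[OF assms] by simp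
  then show ?thesis using rhs_eq[OF assms] by simp
qed

end
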